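(* Let $J\subseteq\mathbb{M}_2$ be a bigraded ideal and $f:\Sigma^{p,q}J\to\mathbb{M}_2$ a nonzero bigraded $\mathbb{M}_2$-module homomorphism. Then exactly one of the following holds: (I) $J$ is of type I and either (i) there are $m,n\ge0$ with $\rho^m\tau^n\in J$ and $f(\rho^m\tau^n)=\rho^a\tau^b$ for some $a\ge m$, $b\ge n$; or (ii) there are $m,n\ge0$ with $\rho^m\tau^n\in J$ and $f(\rho^m\tau^n)=\frac{\theta}{\rho^a\tau^b}$ for some $a,b\ge0$; (II) $J$ is of type II and there are $m,n\ge0$ with $\frac{\theta}{\rho^m\tau^n}\in J$ and $f\big(\frac{\theta}{\rho^m\tau^n}\big)=\frac{\theta}{\rho^a\tau^b}$ for some $0\le a\le m$, $0\le b\le n$.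
   Context: $\mathbb{M}_2$ is the bigraded commutative $\mathbb{F}_2$-algebra with $\mathbb{F}_2$-basis the elements $\rho^m\tau^n$ ($m,n\ge0$) in bidegree $(m,m+n)$ and $\frac{\theta}{\rho^m\tau^n}$ ($m,n\ge 0$) in bidegree $(-m,-2-m-n)$; multiplication: $\rho^a\tau^b\cdot\rho^c\tau^d=\rho^{a+c}\tau^{b+d}$, $\rho^a\tau^b\cdot\frac{\theta}{\rho^c\tau^d}=\frac{\theta}{\rho^{c-a}\tau^{d-b}}$ if $a\le c,b\le d$ and $0$ otherwise, and the product of two elements of the form $\frac{\theta}{\rho^c\tau^d}$ is $0$. $\mathbb{M}_2^+$ is the span of the $\rho^m\tau^n$ and $\mathbb{M}_2^-$ the span of the $\frac{\theta}{\rho^m\tau^n}$. A bigraded ideal $J$ is of type I if it is generated by finitely many homogeneous elements of $\mathbb{M}_2^+$ and $J\cap\mathbb{M}_2^-=\mathbb{M}_2^-$, and of type II if $J\cap\mathbb{M}_2^+=0$ (every bigraded ideal is of one of these types). $\Sigma^{p,q}J$ is the shift with $(\Sigma^{p,q}J)^{a,b}=J^{a-p,b-q}$; module maps preserve bidegree. *)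

theory Defs
  imports Main
begin

text \<open>Model of M_2: F_2-vector space with basis elements
  P m n  = rho^m tau^n  and  N m n = theta/(rho^m tau^n).
  An element is a finite set of basis elements (F_2 coefficients);
  addition is symmetric difference.\<close>

datatype mbasis = P nat nat | N nat nat

type_synonym m2 = "mbasis set"

definition M2 :: "m2 set" where
  "M2 = {x. finite x}"

fun bmul :: "mbasis \<Rightarrow> mbasis \<Rightarrow> mbasis option" where
  "bmul (P a b) (P c d) = Some (P (a + c) (b + d))"
| "bmul (P a b) (N c d) = (if a \<le> c \<and> b \<le> d then Some (N (c - a) (d - b)) else None)"
| "bmul (N c d) (P a b) = (if a \<le> c \<and> b \<le> d then Some (N (c - a) (d - b)) else None)"
| "bmul (N _ _) (N _ _) = None"

definition madd :: "m2 \<Rightarrow> m2 \<Rightarrow> m2" where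
  "madd x y = (x - y) \<union> (y - x)"

definition mmul :: "m2 \<Rightarrow> m2 \<Rightarrow> m2" where
  "mmul x y = {z. odd (card {(u, v). u \<in> x \<and> v \<in> y \<and> bmul u v = Some z})}"

fun bdeg :: "mbasis \<Rightarrow> int \<times> int" where
  "bdeg (P m n) = (int m, int m + int n)"
| "bdeg (N m n) = (- int m, - 2 - int m - int n)"

definition homog :: "int \<times> int \<Rightarrow> m2 \<Rightarrow> bool" where
  "homog d x \<longleftrightarrow> x \<in> M2 \<and> (\<forall>u\<in>x. bdeg u = d)"

definition comp :: "int \<times> int \<Rightarrow> m2 \<Rightarrow> m2" where
  "comp d x = {u \<in> x. bdeg u = d}"

definition Mplus :: "m2 set" where
  "Mplus = {x \<in> M2. \<forall>u\<in>x. \<exists>m n. u = P m n}"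

definition Mminus :: "m2 set" where
  "Mminus = {x \<in> M2. \<forall>u\<in>x. \<exists>m n. u = N m n}"

definition m2_ideal :: "m2 set \<Rightarrow> bool" where
  "m2_ideal J \<longleftrightarrow> J \<subseteq> M2 \<and> {} \<in> J \<and> (\<forall>x\<in>J. \<forall>y\<in>J. madd x y \<in> J)
     \<and> (\<forall>r\<in>M2. \<forall>x\<in>J. mmul r x \<in> J)"

definition bigraded_ideal :: "m2 set \<Rightarrow> bool" where
  "bigraded_ideal J \<longleftrightarrow> m2_ideal J \<and> (\<forall>x\<in>J. \<forall>d. comp d x \<in> J)"

definition gen_ideal :: "m2 set \<Rightarrow> m2 set" where
  "gen_ideal G = \<Inter>{I. m2_ideal I \<and> G \<subseteq> I}"

definition typeI :: "m2 set \<Rightarrow> bool" where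
  "typeI J \<longleftrightarrow> (\<exists>G. finite G \<and> G \<subseteq> Mplus \<and> (\<forall>g\<in>G. \<exists>d. homog d g)
      \<and> J = gen_ideal G) \<and> J \<inter> Mminus = Mminus"

definition typeII :: "m2 set \<Rightarrow> bool" where
  "typeII J \<longleftrightarrow> J \<inter> Mplus = {{}}"

text \<open>A bigraded M_2-module homomorphism f : Sigma^{p,q} J \<rightarrow> M_2 (only its values
  on J matter). An element of J of bidegree d has bidegree d + (p,q) in Sigma^{p,q} J.\<close>
definition shifted_hom :: "int \<Rightarrow> int \<Rightarrow> m2 set \<Rightarrow> (m2 \<Rightarrow> m2) \<Rightarrow> bool" where
  "shifted_hom p q J f \<longleftrightarrow>
     (\<forall>x\<in>J. f x \<in> M2)
   \<and> (\<forall>x\<in>J. \<forall>y\<in>J. f (madd x y) = madd (f x) (f y))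
   \<and> (\<forall>r\<in>M2. \<forall>x\<in>J. f (mmul r x) = mmul r (f x))
   \<and> (\<forall>x\<in>J. \<forall>d. homog d x \<longrightarrow> homog (fst d + p, snd d + q) (f x))"

end

theory Submission
  imports Defs
begin

lemma bdeg_inj: "bdeg u = bdeg v \<Longrightarrow> u = v"
  by (cases u; cases v) auto

lemma mmul_single: "mmul {u} {v} = (case bmul u v of None \<Rightarrow> {} | Some z \<Rightarrow> {z})"
proof -
  have e: "\<And>z. {(a,b). a\<in>{u} \<and> b\<in>{v} \<and> bmul a b = Some z} = (if bmul u v = Some z then {(u,v)} else {})"
    by auto
  show ?thesis unfolding mmul_def e by (auto split: option.split)
qed

lemma mmul_empty: "mmul r {} = {}" unfolding mmul_def by auto

lemma madd_ee: "madd {} {} = {}" by (simp add: madd_def)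

lemma ideal_sum:
  assumes "m2_ideal I" "finite x" "\<forall>u\<in>x. {u}\<in>I" shows "x \<in> I"
  using assms(2,3)
proof (induction x rule: finite_induct)
  case empty then show ?case using assms(1) by (simp add: m2_ideal_def)
next
  case (insert u x)
  have "madd {u} x = insert u x" using insert.hyps by (auto simp: madd_def)
  moreover have "madd {u} x \<in> I" using assms(1) insert by (simp add: m2_ideal_def)
  ultimately show ?case by simp
qed

lemma single_in:
  assumes "bigraded_ideal J" "x\<in>J" "u\<in>x" shows "{u}\<in>J"
proof -
  have "comp (bdeg u) x = {u}" using assms(3) bdeg_inj by (auto simp: comp_def)
  then show ?thesis using assms by (metis bigraded_ideal_def)
qed

lemma f_empty:
  assumes "m2_ideal J" "shifted_hom p q J f" shows "f {} = {}"
proof -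
  have "{} \<in> J" using assms(1) by (simp add: m2_ideal_def)
  then have "f (madd {} {}) = madd (f {}) (f {})" using assms(2) by (simp add: shifted_hom_def)
  then show ?thesis by (simp add: madd_def)
qed

lemma f_zero:
  assumes "m2_ideal J" "shifted_hom p q J f" "finite x" "\<forall>u\<in>x. {u}\<in>J \<and> f {u} = {}"
  shows "f x = {}"
  using assms(3,4)
proof (induction x rule: finite_induct)
  case empty then show ?case using f_empty assms by blast
next
  case (insert u x)
  have m: "madd {u} x = insert u x" using insert.hyps by (auto simp: madd_def)
  have "x \<in> J" using ideal_sum[OF assms(1)] insert by blast
  moreover have "{u} \<in> J" using insert by blast
  ultimately have "f (madd {u} x) = madd (f {u}) (f x)" using assms(2) by (simp add: shifted_hom_def)
  then show ?case using insert m by (simp add: madd_def)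
qed

lemma f_single:
  assumes "shifted_hom p q J f" "{u}\<in>J" shows "f {u} = {} \<or> (\<exists>v. f {u} = {v})"
proof -
  have "homog (bdeg u) {u}" by (simp add: homog_def M2_def)
  then have h: "homog (fst (bdeg u) + p, snd (bdeg u) + q) (f {u})"
    using assms by (simp add: shifted_hom_def)
  then have "\<forall>a\<in>f {u}. \<forall>b\<in>f {u}. a = b" using bdeg_inj by (simp add: homog_def)
  then show ?thesis by blast
qed

lemma hom_mul:
  assumes "shifted_hom p q J f" "x\<in>J" shows "f (mmul {r} x) = mmul {r} (f x)"
  using assms by (simp add: shifted_hom_def M2_def)

lemma ideal_mul:
  assumes "m2_ideal J" "x\<in>J" shows "mmul {r} x \<in> J"
  using assms by (simp add: m2_ideal_def M2_def)

lemma typeI_of: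
  assumes bi: "bigraded_ideal J" and p1: "{P m1 n1} \<in> J" shows "typeI J"
proof -
  have id: "m2_ideal J" using bi by (simp add: bigraded_ideal_def)
  define S where "S = {(a,b). {P a b} \<in> J}"
  define Mn where "Mn = {(a,b)\<in>S. \<forall>a' b'. (a',b')\<in>S \<and> a'\<le>a \<and> b'\<le>b \<longrightarrow> a'=a \<and> b'=b}"
  define G where "G = (\<lambda>(a,b). {P a b}) ` Mn"
  have below: "\<exists>a0 b0. (a0,b0)\<in>Mn \<and> a0\<le>a \<and> b0\<le>b" if "(a,b)\<in>S" for a b
  proof -
    have "\<exists>z. (\<lambda>(a',b'). (a',b')\<in>S \<and> a'\<le>a \<and> b'\<le>b) z \<and>
        (\<forall>y. (\<lambda>(a',b'). (a',b')\<in>S \<and> a'\<le>a \<and> b'\<le>b) y \<longrightarrow> (\<lambda>(x,y). x+y) z \<le> (\<lambda>(x,y). x+y) y)"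
      by (rule ex_has_least_nat[where k="(a,b)"]) (use that in auto)
    then obtain a0 b0 where z: "(a0,b0)\<in>S" "a0\<le>a" "b0\<le>b"
      and mn: "\<And>a' b'. (a',b')\<in>S \<Longrightarrow> a'\<le>a \<Longrightarrow> b'\<le>b \<Longrightarrow> a0+b0 \<le> a'+b'" by fastforce
    have "(a0,b0)\<in>Mn" unfolding Mn_def using z mn
      by clarsimp (metis le_trans add_le_mono le_antisym nat_add_left_cancel_le add_le_cancel_right)
    then show ?thesis using z by blast
  qed
  have S1: "(m1,n1)\<in>S" using p1 S_def by simp
  have finMn: "finite Mn"
  proof -
    have sub: "Mn \<subseteq> {(m1,n1)} \<union> {z\<in>Mn. fst z < m1} \<union> {z\<in>Mn. snd z < n1}"
      using S1 unfolding Mn_def by force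
    have f1: "finite {z\<in>Mn. fst z < m1}"
    proof (rule finite_imageD)
      show "finite (fst ` {z\<in>Mn. fst z < m1})" by (rule finite_subset[of _ "{..<m1}"]) auto
      show "inj_on fst {z\<in>Mn. fst z < m1}"
        unfolding inj_on_def Mn_def by clarsimp (metis nat_le_linear)
    qed
    have f2: "finite {z\<in>Mn. snd z < n1}"
    proof (rule finite_imageD)
      show "finite (snd ` {z\<in>Mn. snd z < n1})" by (rule finite_subset[of _ "{..<n1}"]) auto
      show "inj_on snd {z\<in>Mn. snd z < n1}"
        unfolding inj_on_def Mn_def by clarsimp (metis nat_le_linear)
    qed
    show ?thesis using sub f1 f2 finite_subset by blast
  qed
  have GJ: "G \<subseteq> J" unfolding G_def Mn_def S_def by auto
  have Nin: "{N i j} \<in> I" if "m2_ideal I" "G \<subseteq> I" for i j I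
  proof -
    obtain a0 b0 where "(a0,b0)\<in>Mn" using below[OF S1] by blast
    then have "{P a0 b0} \<in> I" using that G_def by blast
    then have "mmul {N (i+a0) (j+b0)} {P a0 b0} \<in> I" using ideal_mul that by blast
    then show ?thesis by (simp add: mmul_single)
  qed
  have JG: "J = gen_ideal G"
  proof
    show "gen_ideal G \<subseteq> J" unfolding gen_ideal_def using id GJ by blast
    show "J \<subseteq> gen_ideal G"
    proof
      fix x assume xJ: "x \<in> J"
      show "x \<in> gen_ideal G" unfolding gen_ideal_def
      proof (rule InterI, clarify)
        fix I assume I: "m2_ideal I" "G \<subseteq> I"
        have "\<forall>u\<in>x. {u}\<in>I"
        proof
          fix u assume ux: "u\<in>x"
          show "{u}\<in>I"
          proof (cases u)
            case (P a b)
            then have "(a,b)\<in>S" using single_in[OF bi xJ ux] S_def by simp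
            then obtain a0 b0 where ab: "(a0,b0)\<in>Mn" "a0\<le>a" "b0\<le>b" using below by blast
            then have "{P a0 b0} \<in> I" using I G_def by blast
            then have "mmul {P (a-a0) (b-b0)} {P a0 b0} \<in> I" using ideal_mul I by blast
            then show ?thesis using P ab by (simp add: mmul_single)
          next
            case (N i j) then show ?thesis using Nin I by simp
          qed
        qed
        moreover have "finite x" using xJ id by (auto simp: m2_ideal_def M2_def)
        ultimately show "x \<in> I" using ideal_sum I by blast
      qed
    qed
  qed
  have fG: "finite G" using finMn G_def by simp
  have GP: "G \<subseteq> Mplus" unfolding G_def Mplus_def M2_def by auto
  have Gh: "\<forall>g\<in>G. \<exists>d. homog d g" unfolding G_def homog_def M2_def by auto
  have "Mminus \<subseteq> J"
  proof
    fix x assume x: "x \<in> Mminus"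
    have "\<forall>u\<in>x. {u}\<in>J" using x Nin[OF id GJ] by (auto simp: Mminus_def)
    moreover have "finite x" using x by (simp add: Mminus_def M2_def)
    ultimately show "x \<in> J" using ideal_sum[OF id] by blast
  qed
  then have JM: "J \<inter> Mminus = Mminus" by blast
  show ?thesis unfolding typeI_def
    apply (rule conjI[OF exI[of _ G]])
    using fG GP Gh JG JM by simp_all
qed

lemma excl: assumes "typeI J" shows "\<not> typeII J"
proof
  assume t2: "typeII J"
  obtain G where G: "G \<subseteq> Mplus" "J = gen_ideal G" and mm: "J \<inter> Mminus = Mminus"
    using assms unfolding typeI_def by blast
  have "G \<subseteq> J" using G(2) unfolding gen_ideal_def by blast
  then have "G \<subseteq> J \<inter> Mplus" using G(1) by blast
  then have GE: "G \<subseteq> {{}}" using t2 unfolding typeII_def by simp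
  have e: "mmul r {} = {}" for r unfolding mmul_def by auto
  have me: "madd {} {} = {}" by (rule madd_ee)
  have "{{}} \<subseteq> M2" by (simp add: M2_def)
  then have "m2_ideal {{}}" unfolding m2_ideal_def using e me by blast
  then have "gen_ideal G \<subseteq> {{}}" using GE unfolding gen_ideal_def by (intro Inter_lower) simp
  then have "J \<subseteq> {{}}" using G(2) by simp
  moreover have "{N 0 0} \<in> Mminus" by (simp add: Mminus_def M2_def)
  ultimately show False using mm by blast
qed

theorem lemmaA2:
  fixes J :: "m2 set" and f :: "m2 \<Rightarrow> m2" and p q :: int
  assumes "bigraded_ideal J"
    and "shifted_hom p q J f"
    and "\<exists>x\<in>J. f x \<noteq> {}"
  shows "let CI = (typeI J \<and>
                ((\<exists>m n. {P m n} \<in> J \<and> (\<exists>a b. a \<ge> m \<and> b \<ge> n \<and> f {P m n} = {P a b}))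
               \<or> (\<exists>m n. {P m n} \<in> J \<and> (\<exists>a b. f {P m n} = {N a b}))));
             CII = (typeII J \<and>
                (\<exists>m n. {N m n} \<in> J \<and> (\<exists>a b. a \<le> m \<and> b \<le> n \<and> f {N m n} = {N a b})))
         in (CI \<and> \<not> CII) \<or> (\<not> CI \<and> CII)"
proof -
  note bi = assms(1) and hom = assms(2)
  have id: "m2_ideal J" using bi by (simp add: bigraded_ideal_def)
  have fe: "f {} = {}" using f_empty id hom by blast
  obtain x where xJ: "x\<in>J" and fx: "f x \<noteq> {}" using assms(3) by blast
  have JM2: "J \<subseteq> M2" using id unfolding m2_ideal_def by blast
  have finx: "finite x" using xJ JM2 unfolding M2_def by blast
  obtain u where ux: "u\<in>x" and fu: "f {u} \<noteq> {}"
    using f_zero[OF id hom finx] fx single_in[OF bi xJ] by blast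
  have uJ: "{u}\<in>J" using single_in[OF bi xJ ux] .
  have empJ: "{} \<in> J" using id by (simp add: m2_ideal_def)
  show ?thesis
  proof (cases "typeII J")
    case False
    have "{} \<in> Mplus" unfolding Mplus_def M2_def by simp
    then obtain y where y: "y\<in>J" "y\<in>Mplus" "y \<noteq> {}"
      using False empJ unfolding typeII_def by blast
    then obtain v where vy: "v\<in>y" by blast
    then obtain m1 n1 where vP: "v = P m1 n1" using y(2) unfolding Mplus_def by blast
    have p1: "{P m1 n1} \<in> J" using single_in[OF bi y(1) vy] vP by simp
    have tI: "typeI J" using typeI_of[OF bi p1] .
    have "\<exists>m n. {P m n}\<in>J \<and> f {P m n} \<noteq> {}"
    proof (cases u)
      case (P m n) then show ?thesis using uJ fu by blast
    next
      case (N i j)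
      have "f {P m1 n1} \<noteq> {}"
      proof
        assume z: "f {P m1 n1} = {}"
        have "f (mmul {N (i+m1) (j+n1)} {P m1 n1}) = mmul {N (i+m1) (j+n1)} (f {P m1 n1})"
          using hom_mul[OF hom p1] .
        moreover have "mmul {N (i+m1) (j+n1)} {P m1 n1} = {N i j}" by (simp add: mmul_single)
        ultimately have "f {u} = {}" using z N by (simp add: mmul_empty)
        then show False using fu by simp
      qed
      then show ?thesis using p1 by blast
    qed
    then obtain m n where mJ: "{P m n}\<in>J" and fm: "f {P m n} \<noteq> {}" by blast
    then obtain v where fv: "f {P m n} = {v}" using f_single[OF hom mJ] by blast
    have CI: "((\<exists>m n. {P m n} \<in> J \<and> (\<exists>a b. a \<ge> m \<and> b \<ge> n \<and> f {P m n} = {P a b}))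
               \<or> (\<exists>m n. {P m n} \<in> J \<and> (\<exists>a b. f {P m n} = {N a b})))"
    proof (cases v)
      case (P a b)
      have "a \<ge> m \<and> b \<ge> n"
      proof (rule ccontr)
        assume c: "\<not> (a \<ge> m \<and> b \<ge> n)"
        have "f (mmul {N a b} {P m n}) = mmul {N a b} (f {P m n})" using hom_mul[OF hom mJ] .
        moreover have "mmul {N a b} {P m n} = {}" using c by (simp add: mmul_single)
        moreover have "mmul {N a b} {P a b} = {N 0 0}" by (simp add: mmul_single)
        ultimately show False using fe fv P by simp
      qed
      then show ?thesis using mJ fv P by blast
    next
      case (N a b) then show ?thesis using mJ fv by blast
    qed
    show ?thesis unfolding Let_def using tI CI False by blast
  next
    case True
    have nI: "\<not> typeI J" using excl True by blast
    obtain m n where uN: "u = N m n"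
    proof (cases u)
      case (P a b)
      have "{u} \<in> Mplus" unfolding Mplus_def M2_def using P by simp
      then have "{u} \<in> J \<inter> Mplus" using uJ by blast
      then show ?thesis using True unfolding typeII_def by blast
    qed
    obtain v where fv: "f {N m n} = {v}" using f_single[OF hom uJ] fu uN by blast
    have "\<exists>a b. a \<le> m \<and> b \<le> n \<and> v = N a b"
    proof (cases v)
      case (P a b)
      have "f (mmul {N a b} {N m n}) = mmul {N a b} (f {N m n})" using hom_mul[OF hom] uJ uN by simp
      moreover have "mmul {N a b} {N m n} = {}" by (simp add: mmul_single)
      moreover have "mmul {N a b} {P a b} = {N 0 0}" by (simp add: mmul_single)
      ultimately show ?thesis using fe fv P by simp
    next
      case (N a b)
      have "a \<le> m \<and> b \<le> n"
      proof (rule ccontr)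
        assume c: "\<not> (a \<le> m \<and> b \<le> n)"
        have "f (mmul {P a b} {N m n}) = mmul {P a b} (f {N m n})" using hom_mul[OF hom] uJ uN by simp
        moreover have "mmul {P a b} {N m n} = {}" using c by (simp add: mmul_single)
        moreover have "mmul {P a b} {N a b} = {N 0 0}" by (simp add: mmul_single)
        ultimately show False using fe fv N by simp
      qed
      then show ?thesis using N by blast
    qed
    then have "\<exists>a b. a \<le> m \<and> b \<le> n \<and> f {N m n} = {N a b}" using fv by blast
    then show ?thesis unfolding Let_def using True nI uJ uN by blast
  qed
qed

end
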